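(* Let $P$ be a 6-stack and let $Q\subseteq P$ be a subset which, with the induced order, is isomorphic to a tower of sections. If $i\ge0$ is an integer with $P(i)\subseteq Q$ but $P(i+1)\not\subseteq Q$, then $P(i+1)\cap Q=\emptyset$.
   Context: All posets are finite. For a poset $P$ and $p\in P$, the rank $r(p)$ of $p$ is the largest $m$ such that there is a chain $p_0<\dots<p_m=p$ in $P$. $P$ is ranked of rank $r(P)$ if every maximal chain has exactly $r(P)+1$ elements. For $0\le i\le j$, $P(i,j)=\{p\in P:i\le r(p)\le j\}$, $P(i)=P(i,i)$ (induced order). The 6-crown $C_6$ is the poset on $\{x_0,x_1,x_2,y_0,y_1,y_2\}$ whose only strict comparabilities are $x_0<y_0>x_1<y_1>x_2<y_2>x_0$. A 6-stack is a ranked poset $P$ of rank $n\ge1$ such that $P(i,i+1)\cong C_6$ for each $0\le i<n$. The ordinal sum of posets $P_1,\dots,P_k$ ($k\ge1$) is their disjoint union ordered by the orders of the $P_i$ together with $p<q$ whenever $p\in P_i,q\in P_j,i<j$. A section is either a two-element antichain or a poset on the set $\{[i,k]: 0\le i\le 2,\ 0\le k\le n\}$ (with $3(n+1)$ distinct elements), for some $n\ge 1$, such that: (1) $[i,k]<[i,l]$ whenever $0\le k<l\le n$; (2) for each $k$, $\{[0,k],[1,k],[2,k]\}$ is an antichain; (3) $[i,k]<[j,l]$ implies $[i+1,k]<[j+1,l]$ (first indices mod $3$); (4) for each $0\le k<n$ there are $i,j$ with $[i,k]\not<[j,k+1]$. A tower of sections is an ordinal sum of one or more sections. *)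

theory Defs
  imports Main
begin

definition poset :: "'a set \<Rightarrow> ('a \<times> 'a) set \<Rightarrow> bool" where
  "poset P r \<longleftrightarrow> finite P \<and> partial_order_on P r"

definition less_in :: "('a \<times> 'a) set \<Rightarrow> 'a \<Rightarrow> 'a \<Rightarrow> bool" where
  "less_in r x y \<longleftrightarrow> (x, y) \<in> r \<and> x \<noteq> y"

definition induced :: "('a \<times> 'a) set \<Rightarrow> 'a set \<Rightarrow> ('a \<times> 'a) set" where
  "induced r A = r \<inter> (A \<times> A)"

definition chain_list :: "'a set \<Rightarrow> ('a \<times> 'a) set \<Rightarrow> 'a list \<Rightarrow> bool" where
  "chain_list P r xs \<longleftrightarrow> set xs \<subseteq> P \<and> sorted_wrt (less_in r) xs"

definition rank :: "'a set \<Rightarrow> ('a \<times> 'a) set \<Rightarrow> 'a \<Rightarrow> nat" where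
  "rank P r p = Max {length xs - 1 | xs. chain_list P r xs \<and> xs \<noteq> [] \<and> last xs = p}"

definition is_chain :: "'a set \<Rightarrow> ('a \<times> 'a) set \<Rightarrow> 'a set \<Rightarrow> bool" where
  "is_chain P r C \<longleftrightarrow> C \<subseteq> P \<and> (\<forall>x\<in>C. \<forall>y\<in>C. (x, y) \<in> r \<or> (y, x) \<in> r)"

definition maximal_chain :: "'a set \<Rightarrow> ('a \<times> 'a) set \<Rightarrow> 'a set \<Rightarrow> bool" where
  "maximal_chain P r C \<longleftrightarrow> is_chain P r C \<and> (\<forall>D. is_chain P r D \<and> C \<subseteq> D \<longrightarrow> D = C)"

definition ranked_of_rank :: "'a set \<Rightarrow> ('a \<times> 'a) set \<Rightarrow> nat \<Rightarrow> bool" where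
  "ranked_of_rank P r n \<longleftrightarrow> (\<forall>C. maximal_chain P r C \<longrightarrow> card C = n + 1)"

(* P(i,j) as a set; its order is the induced one *)
definition levels :: "'a set \<Rightarrow> ('a \<times> 'a) set \<Rightarrow> nat \<Rightarrow> nat \<Rightarrow> 'a set" where
  "levels P r i j = {p \<in> P. i \<le> rank P r p \<and> rank P r p \<le> j}"

definition poset_iso :: "'a set \<Rightarrow> ('a \<times> 'a) set \<Rightarrow> 'b set \<Rightarrow> ('b \<times> 'b) set \<Rightarrow> bool" where
  "poset_iso A r B s \<longleftrightarrow> (\<exists>f. bij_betw f A B \<and> (\<forall>x\<in>A. \<forall>y\<in>A. (x, y) \<in> r \<longleftrightarrow> (f x, f y) \<in> s))"

(* the 6-crown: x_i = i, y_i = 3 + i *)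
definition crown6_carrier :: "nat set" where
  "crown6_carrier = {0..5}"

definition crown6_rel :: "(nat \<times> nat) set" where
  "crown6_rel = Id_on crown6_carrier \<union> {(0,3), (1,3), (1,4), (2,4), (2,5), (0,5)}"

definition six_stack :: "'a set \<Rightarrow> ('a \<times> 'a) set \<Rightarrow> bool" where
  "six_stack P r \<longleftrightarrow> poset P r \<and>
     (\<exists>n\<ge>1. ranked_of_rank P r n \<and>
        (\<forall>i<n. poset_iso (levels P r i (i+1)) (induced r (levels P r i (i+1)))
                         crown6_carrier crown6_rel))"

(* A section, represented concretely on nat \<times> nat; [i,k] is the pair (i,k). *)
definition is_section :: "(nat \<times> nat) set \<Rightarrow> ((nat \<times> nat) \<times> (nat \<times> nat)) set \<Rightarrow> bool" where
  "is_section A s \<longleftrightarrow> partial_order_on A s \<and>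
    ((card A = 2 \<and> (\<forall>x\<in>A. \<forall>y\<in>A. (x, y) \<in> s \<longrightarrow> x = y))
     \<or> (\<exists>n\<ge>1. A = {0..2} \<times> {0..n}
         \<and> (\<forall>i\<le>2. \<forall>k l. k < l \<and> l \<le> n \<longrightarrow> less_in s (i,k) (i,l))
         \<and> (\<forall>k\<le>n. \<forall>i\<le>2. \<forall>j\<le>2. i \<noteq> j \<longrightarrow> ((i,k),(j,k)) \<notin> s)
         \<and> (\<forall>i\<le>2. \<forall>j\<le>2. \<forall>k\<le>n. \<forall>l\<le>n. less_in s (i,k) (j,l)
               \<longrightarrow> less_in s ((i+1) mod 3, k) ((j+1) mod 3, l))
         \<and> (\<forall>k<n. \<exists>i\<le>2. \<exists>j\<le>2. \<not> less_in s (i,k) (j,k+1))))"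

definition osum_carrier :: "('b set \<times> ('b \<times> 'b) set) list \<Rightarrow> (nat \<times> 'b) set" where
  "osum_carrier L = {(j, x). j < length L \<and> x \<in> fst (L ! j)}"

definition osum_rel :: "('b set \<times> ('b \<times> 'b) set) list \<Rightarrow> ((nat \<times> 'b) \<times> (nat \<times> 'b)) set" where
  "osum_rel L = {((j, x), (j', y)). (j, x) \<in> osum_carrier L \<and> (j', y) \<in> osum_carrier L \<and>
                   (j < j' \<or> (j = j' \<and> (x, y) \<in> snd (L ! j)))}"

definition iso_tower_of_sections :: "'a set \<Rightarrow> ('a \<times> 'a) set \<Rightarrow> bool" where
  "iso_tower_of_sections A s \<longleftrightarrow>
     (\<exists>L. L \<noteq> [] \<and> (\<forall>S\<in>set L. is_section (fst S) (snd S)) \<and>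
          poset_iso A s (osum_carrier L) (osum_rel L))"

end

theory Submission
  imports Defs
begin

context
  fixes P :: "'a set" and r :: "('a \<times> 'a) set"
  assumes po: "poset P r"
begin

lemma fin: "finite P" using po by (simp add: poset_def)
lemma rsub: "r \<subseteq> P \<times> P" using po by (simp add: poset_def partial_order_on_def preorder_on_def)
lemma rrefl: "x \<in> P \<Longrightarrow> (x,x) \<in> r" using po by (simp add: poset_def partial_order_on_def preorder_on_def refl_on_def)
lemma rtrans: "(x,y) \<in> r \<Longrightarrow> (y,z) \<in> r \<Longrightarrow> (x,z) \<in> r"
  using po unfolding poset_def partial_order_on_def preorder_on_def trans_def by blast
lemma rantisym: "(x,y) \<in> r \<Longrightarrow> (y,x) \<in> r \<Longrightarrow> x = y"
  using po unfolding poset_def partial_order_on_def antisym_def by blast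

lemma less_trans: "less_in r x y \<Longrightarrow> less_in r y z \<Longrightarrow> less_in r x z"
  unfolding less_in_def using rtrans rantisym by blast

lemma chain_distinct: "chain_list P r xs \<Longrightarrow> distinct xs"
  unfolding chain_list_def distinct_conv_nth sorted_wrt_iff_nth_less less_in_def
  by (metis linorder_neqE_nat)

lemma chain_len: "chain_list P r xs \<Longrightarrow> length xs \<le> card P"
  using chain_distinct[of xs] fin by (metis card_mono chain_list_def distinct_card)

definition RS where "RS p = {length xs - 1 | xs. chain_list P r xs \<and> xs \<noteq> [] \<and> last xs = p}"

lemma RS_fin: "finite (RS p)"
proof -
  have "RS p \<subseteq> {..card P}" unfolding RS_def using chain_len by fastforce
  then show ?thesis using finite_subset by blast
qed

lemma RS_ne: "p \<in> P \<Longrightarrow> 0 \<in> RS p"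
  unfolding RS_def chain_list_def by (rule CollectI, rule exI[of _ "[p]"]) auto

lemma rank_RS: "rank P r p = Max (RS p)" unfolding rank_def RS_def by simp

lemma rank_in: "p \<in> P \<Longrightarrow> rank P r p \<in> RS p"
  using RS_fin RS_ne rank_RS by (metis Max_in empty_iff)

lemma rank_ge: "m \<in> RS p \<Longrightarrow> m \<le> rank P r p"
  using RS_fin rank_RS by simp

lemma R1: "p \<in> P \<Longrightarrow> \<exists>xs. chain_list P r xs \<and> xs \<noteq> [] \<and> last xs = p \<and> length xs = Suc (rank P r p)"
proof -
  assume "p \<in> P"
  from rank_in[OF this] obtain xs where "chain_list P r xs" "xs \<noteq> []" "last xs = p" "rank P r p = length xs - 1"
    unfolding RS_def by blast
  then show ?thesis by (metis Suc_pred' length_greater_0_conv)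
qed

lemma chain_below_last: "chain_list P r xs \<Longrightarrow> xs \<noteq> [] \<Longrightarrow> z \<in> set xs \<Longrightarrow> z = last xs \<or> less_in r z (last xs)"
proof -
  assume c: "chain_list P r xs" and ne: "xs \<noteq> []" and z: "z \<in> set xs"
  have e: "xs = butlast xs @ [last xs]" using ne by simp
  have "sorted_wrt (less_in r) (butlast xs @ [last xs])" using c e unfolding chain_list_def by metis
  then have "\<forall>u\<in>set (butlast xs). less_in r u (last xs)" by (simp add: sorted_wrt_append)
  moreover have "z \<in> set (butlast xs) \<or> z = last xs" using z e by (metis in_set_butlast_appendI list.set_intros(1) rotate1.simps(2) set_ConsD set_rotate1)
  ultimately show ?thesis by blast
qed

lemma R2: "x \<in> P \<Longrightarrow> y \<in> P \<Longrightarrow> less_in r x y \<Longrightarrow> rank P r x < rank P r y"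
proof -
  assume x: "x \<in> P" and y: "y \<in> P" and l: "less_in r x y"
  obtain xs where c: "chain_list P r xs" "xs \<noteq> []" "last xs = x" "length xs = Suc (rank P r x)"
    using R1[OF x] by blast
  have "chain_list P r (xs @ [y])"
    unfolding chain_list_def sorted_wrt_append
    using c y l chain_below_last[OF c(1) c(2)] less_trans unfolding chain_list_def by auto
  then have "length (xs @ [y]) - 1 \<in> RS y" unfolding RS_def by force
  then show ?thesis using rank_ge c by fastforce
qed

lemma R2': "x \<in> P \<Longrightarrow> y \<in> P \<Longrightarrow> (x,y) \<in> r \<Longrightarrow> rank P r y \<le> rank P r x \<Longrightarrow> x = y"
  using R2 unfolding less_in_def by fastforce

lemma R3: "y \<in> P \<Longrightarrow> rank P r y = Suc m \<Longrightarrow> \<exists>w\<in>P. less_in r w y \<and> rank P r w = m"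
proof -
  assume y: "y \<in> P" and ry: "rank P r y = Suc m"
  obtain xs where c: "chain_list P r xs" "xs \<noteq> []" "last xs = y" "length xs = Suc (rank P r y)"
    using R1[OF y] by blast
  define w where "w = last (butlast xs)"
  have bne: "butlast xs \<noteq> []" using c ry by (metis length_butlast diff_Suc_1 length_0_conv nat.distinct(1))
  have e: "xs = butlast xs @ [y]" using c(2,3) append_butlast_last_id by metis
  have so: "sorted_wrt (less_in r) (butlast xs @ [y])" using c e unfolding chain_list_def by metis
  have cb: "chain_list P r (butlast xs)" using c so unfolding chain_list_def sorted_wrt_append
    by (meson in_set_butlastD subset_code(1))
  have wS: "w \<in> set (butlast xs)" using bne w_def by simp
  have wP: "w \<in> P" using cb wS unfolding chain_list_def by blast
  have "less_in r w y" using so wS unfolding sorted_wrt_append by simp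
  moreover have "rank P r w < Suc m" using R2[OF wP y] calculation ry by simp
  moreover have "length (butlast xs) - 1 \<in> RS w" unfolding RS_def using cb bne w_def by blast
  then have "m \<le> rank P r w" using rank_ge c ry by fastforce
  ultimately show ?thesis using wP by auto
qed

lemma R4: assumes "ranked_of_rank P r n" "p \<in> P" shows "rank P r p \<le> n"
proof -
  obtain xs where c: "chain_list P r xs" "xs \<noteq> []" "last xs = p" "length xs = Suc (rank P r p)"
    using R1[OF assms(2)] by blast
  define C where "C = set xs"
  have cardC: "card C = Suc (rank P r p)" using chain_distinct[OF c(1)] c(4) C_def by (simp add: distinct_card)
  have chC: "is_chain P r C" unfolding is_chain_def C_def
  proof (intro conjI ballI)
    show "set xs \<subseteq> P" using c unfolding chain_list_def by auto
    fix x y assume "x \<in> set xs" "y \<in> set xs"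
    then obtain a b where ab: "a < length xs" "b < length xs" "x = xs!a" "y = xs!b" by (metis in_set_conv_nth)
    have so: "sorted_wrt (less_in r) xs" using c unfolding chain_list_def by auto
    show "(x, y) \<in> r \<or> (y, x) \<in> r"
    proof (cases a b rule: linorder_cases)
      case less then show ?thesis using so ab unfolding sorted_wrt_iff_nth_less less_in_def by auto
    next
      case equal then show ?thesis using ab rrefl \<open>set xs \<subseteq> P\<close> by (metis nth_mem subsetD)
    next
      case greater then show ?thesis using so ab unfolding sorted_wrt_iff_nth_less less_in_def by auto
    qed
  qed
  have "\<exists>D. (is_chain P r D \<and> C \<subseteq> D) \<and> (\<forall>E. (is_chain P r E \<and> C \<subseteq> E) \<longrightarrow> card E \<le> card D)"
  proof (rule ex_has_greatest_nat[where b = "Suc (card P)"])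
    show "is_chain P r C \<and> C \<subseteq> C" using chC by simp
    show "\<forall>y. is_chain P r y \<and> C \<subseteq> y \<longrightarrow> card y < Suc (card P)"
      using fin unfolding is_chain_def by (simp add: card_mono le_imp_less_Suc)
  qed
  then obtain D where D: "is_chain P r D" "C \<subseteq> D" "\<forall>E. (is_chain P r E \<and> C \<subseteq> E) \<longrightarrow> card E \<le> card D" by blast
  have finD: "finite D" using D(1) fin unfolding is_chain_def using finite_subset by blast
  have "maximal_chain P r D" unfolding maximal_chain_def
  proof (intro conjI allI impI)
    show "is_chain P r D" by fact
    fix E assume E: "is_chain P r E \<and> D \<subseteq> E"
    then have "finite E" using fin unfolding is_chain_def using finite_subset by blast
    moreover have "card E \<le> card D" using D(3) E D(2) by blast
    ultimately show "E = D" using E card_seteq by blast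
  qed
  then have "card D = n + 1" using assms(1) unfolding ranked_of_rank_def by blast
  moreover have "card C \<le> card D" using finD D(2) card_mono by blast
  ultimately show ?thesis using cardC by simp
qed

end


lemma stack_po: "six_stack P r \<Longrightarrow> poset P r" by (simp add: six_stack_def)

lemma crown_ex:
  assumes st: "six_stack P r" and q: "q \<in> P" "rank P r q = Suc j"
  shows "\<exists>f. bij_betw f (levels P r j (Suc j)) crown6_carrier \<and>
     (\<forall>x\<in>levels P r j (Suc j). \<forall>y\<in>levels P r j (Suc j). (x,y) \<in> r \<longleftrightarrow> (f x, f y) \<in> crown6_rel)"
proof -
  have po: "poset P r" using st stack_po by blast
  obtain n where n: "ranked_of_rank P r n" "\<forall>i<n. poset_iso (levels P r i (i+1)) (induced r (levels P r i (i+1)))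
                         crown6_carrier crown6_rel" using st unfolding six_stack_def by blast
  have "Suc j \<le> n" using R4[OF po n(1) q(1)] q(2) by simp
  then have "poset_iso (levels P r j (j+1)) (induced r (levels P r j (j+1))) crown6_carrier crown6_rel" using n(2) by simp
  then show ?thesis unfolding poset_iso_def induced_def by auto
qed

context
  fixes P :: "'a set" and r :: "('a \<times> 'a) set" and j :: nat and f :: "'a \<Rightarrow> nat"
  assumes po: "poset P r"
    and fb: "bij_betw f (levels P r j (Suc j)) crown6_carrier"
    and fr: "\<forall>x\<in>levels P r j (Suc j). \<forall>y\<in>levels P r j (Suc j). (x,y) \<in> r \<longleftrightarrow> (f x, f y) \<in> crown6_rel"
begin

lemma inL: "p \<in> P \<Longrightarrow> rank P r p = j \<or> rank P r p = Suc j \<Longrightarrow> p \<in> levels P r j (Suc j)"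
  unfolding levels_def by auto

lemma Lrank: "p \<in> levels P r j (Suc j) \<Longrightarrow> p \<in> P \<and> (rank P r p = j \<or> rank P r p = Suc j)"
  unfolding levels_def by auto

lemma fsurj: "c \<le> 5 \<Longrightarrow> \<exists>p\<in>levels P r j (Suc j). f p = c"
  using fb unfolding bij_betw_def crown6_carrier_def by (metis atLeastAtMost_iff imageE le0)

lemma finj: "p \<in> levels P r j (Suc j) \<Longrightarrow> q \<in> levels P r j (Suc j) \<Longrightarrow> f p = f q \<Longrightarrow> p = q"
  using fb unfolding bij_betw_def inj_on_def by blast

lemma frange: "p \<in> levels P r j (Suc j) \<Longrightarrow> f p \<le> 5"
  using fb unfolding bij_betw_def crown6_carrier_def by auto

lemma pos_low: assumes p: "p \<in> P" "rank P r p = j" shows "f p < 3"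
proof (rule ccontr)
  assume "\<not> f p < 3"
  then have fp: "f p = 3 \<or> f p = 4 \<or> f p = 5" using frange[OF inL[OF p(1)]] p by auto
  define c where "c = f p - 3"
  have "c \<le> 5" using fp c_def by auto
  then obtain q where q: "q \<in> levels P r j (Suc j)" "f q = c" using fsurj by blast
  have pL: "p \<in> levels P r j (Suc j)" using inL p by blast
  have "(f q, f p) \<in> crown6_rel" using fp q c_def unfolding crown6_rel_def by auto
  then have "(q,p) \<in> r" using fr q pL by blast
  moreover have "q \<noteq> p" using q fp c_def by auto
  ultimately have "rank P r q < rank P r p" using R2[OF po] q pL Lrank unfolding less_in_def by blast
  then show False using q p Lrank by force
qed

lemma pos_high: assumes p: "p \<in> P" "rank P r p = Suc j" shows "f p \<ge> 3"
proof -
  obtain w where w: "w \<in> P" "less_in r w p" "rank P r w = j" using R3[OF po p] by blast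
  have pL: "p \<in> levels P r j (Suc j)" using inL p by blast
  have wL: "w \<in> levels P r j (Suc j)" using inL w by blast
  have "(f w, f p) \<in> crown6_rel" using fr w pL wL unfolding less_in_def by blast
  moreover have "f w \<noteq> f p" using finj[OF wL pL] w unfolding less_in_def by blast
  moreover have "f w < 3" using pos_low w by blast
  ultimately show ?thesis unfolding crown6_rel_def crown6_carrier_def by auto
qed

lemma rank_of_f: assumes "p \<in> levels P r j (Suc j)" shows "(f p < 3 \<longrightarrow> rank P r p = j) \<and> (f p \<ge> 3 \<longrightarrow> rank P r p = Suc j)"
proof -
  have "p \<in> P" "rank P r p = j \<or> rank P r p = Suc j" using Lrank[OF assms] by auto
  then show ?thesis using pos_low[of p] pos_high[of p] by auto
qed

lemma preim: assumes "c \<le> 5" shows "\<exists>p\<in>P. f p = c \<and> rank P r p = (if c < 3 then j else Suc j)"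
proof -
  obtain p where p: "p \<in> levels P r j (Suc j)" "f p = c" using fsurj[OF assms] by blast
  have "p \<in> P" using Lrank[OF p(1)] by blast
  moreover have "rank P r p = (if c < 3 then j else Suc j)" using rank_of_f[OF p(1)] p(2) by auto
  ultimately show ?thesis using p(2) by blast
qed

lemma K1: assumes "x \<in> P" "x' \<in> P" "z \<in> P" "rank P r x = j" "rank P r x' = j" "x \<noteq> x'" "rank P r z = Suc j"
  shows "(x,z) \<in> r \<or> (x',z) \<in> r"
proof -
  have L: "x \<in> levels P r j (Suc j)" "x' \<in> levels P r j (Suc j)" "z \<in> levels P r j (Suc j)" using inL assms by auto
  have a: "f x < 3" "f x' < 3" "f z \<ge> 3" "f z \<le> 5" "f x \<noteq> f x'" using pos_low pos_high assms frange L finj by blast+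
  have b: "f x \<in> {0,1,2}" "f x' \<in> {0,1,2}" "f z \<in> {3,4,5}" using a by auto
  have "(f x, f z) \<in> crown6_rel \<or> (f x', f z) \<in> crown6_rel"
    using b a(5) unfolding crown6_rel_def crown6_carrier_def by auto
  then show ?thesis using fr L by blast
qed

lemma K2: assumes "x \<in> P" "z \<in> P" "z' \<in> P" "rank P r x = j" "rank P r z = Suc j" "z \<noteq> z'" "rank P r z' = Suc j"
  shows "(x,z) \<in> r \<or> (x,z') \<in> r"
proof -
  have L: "x \<in> levels P r j (Suc j)" "z' \<in> levels P r j (Suc j)" "z \<in> levels P r j (Suc j)" using inL assms by auto
  have a: "f x < 3" "f z \<ge> 3" "f z' \<ge> 3" "f z \<le> 5" "f z' \<le> 5" "f z \<noteq> f z'" using pos_low pos_high assms frange L finj by blast+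
  have b: "f x \<in> {0,1,2}" "f z' \<in> {3,4,5}" "f z \<in> {3,4,5}" using a by auto
  have "(f x, f z) \<in> crown6_rel \<or> (f x, f z') \<in> crown6_rel"
    using b a(6) unfolding crown6_rel_def crown6_carrier_def by auto
  then show ?thesis using fr L by blast
qed

lemma K3: assumes "z \<in> P" "rank P r z = Suc j" shows "\<exists>x\<in>P. rank P r x = j \<and> (x,z) \<notin> r"
proof -
  have zL: "z \<in> levels P r j (Suc j)" using inL assms by auto
  have a: "f z \<ge> 3" "f z \<le> 5" using pos_high assms frange zL by auto
  define c where "c = (if f z = 3 then 2 else if f z = 4 then 0 else (1::nat))"
  have c: "c \<le> 5" "c < 3" using c_def by auto
  obtain x where x: "x \<in> P" "f x = c" "rank P r x = j" using preim[OF c(1)] c(2) by auto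
  have xL: "x \<in> levels P r j (Suc j)" using inL x by auto
  have "(f x, f z) \<notin> crown6_rel" using a x(2) c_def unfolding crown6_rel_def crown6_carrier_def by auto
  then show ?thesis using fr xL zL x by blast
qed

lemma K4: assumes "z1 \<in> P" "z2 \<in> P" "z3 \<in> P" "z \<in> P" "rank P r z1 = Suc j" "rank P r z2 = Suc j" "rank P r z3 = Suc j"
   "rank P r z = Suc j" "z1 \<noteq> z2" "z1 \<noteq> z3" "z2 \<noteq> z3"
  shows "z = z1 \<or> z = z2 \<or> z = z3"
proof -
  have L: "z1 \<in> levels P r j (Suc j)" "z2 \<in> levels P r j (Suc j)" "z3 \<in> levels P r j (Suc j)" "z \<in> levels P r j (Suc j)"
    using inL assms by auto
  have a: "f z1 \<ge> 3" "f z2 \<ge> 3" "f z3 \<ge> 3" "f z \<ge> 3" "f z1 \<le> 5" "f z2 \<le> 5" "f z3 \<le> 5" "f z \<le> 5"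
    using pos_high assms frange L by auto
  have d: "f z1 \<noteq> f z2" "f z1 \<noteq> f z3" "f z2 \<noteq> f z3" using finj L assms by blast+
  have "f z = f z1 \<or> f z = f z2 \<or> f z = f z3" using a d by linarith
  then show ?thesis using finj L by blast
qed

lemma K5: "\<exists>z1\<in>P. \<exists>z2\<in>P. \<exists>z3\<in>P. rank P r z1 = Suc j \<and> rank P r z2 = Suc j \<and> rank P r z3 = Suc j
   \<and> z1 \<noteq> z2 \<and> z1 \<noteq> z3 \<and> z2 \<noteq> z3"
proof -
  obtain z1 where 1: "z1 \<in> P" "f z1 = 3" "rank P r z1 = Suc j" using preim[of 3] by auto
  obtain z2 where 2: "z2 \<in> P" "f z2 = 4" "rank P r z2 = Suc j" using preim[of 4] by auto
  obtain z3 where 3: "z3 \<in> P" "f z3 = 5" "rank P r z3 = Suc j" using preim[of 5] by auto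
  have "z1 \<noteq> z2" "z1 \<noteq> z3" "z2 \<noteq> z3" using 1 2 3 by auto
  then show ?thesis using 1 2 3 by blast
qed

lemma K6: "\<exists>x1\<in>P. \<exists>x2\<in>P. rank P r x1 = j \<and> rank P r x2 = j \<and> x1 \<noteq> x2"
proof -
  obtain z1 where 1: "z1 \<in> P" "f z1 = 0" "rank P r z1 = j" using preim[of 0] by auto
  obtain z2 where 2: "z2 \<in> P" "f z2 = 1" "rank P r z2 = j" using preim[of 1] by auto
  have "z1 \<noteq> z2" using 1 2 by auto
  then show ?thesis using 1 2 by blast
qed

end


lemma SK1: assumes st: "six_stack P r" and "x \<in> P" "x' \<in> P" "z \<in> P" "rank P r x = j" "rank P r x' = j" "x \<noteq> x'" "rank P r z = Suc j"
  shows "(x,z) \<in> r \<or> (x',z) \<in> r"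
proof -
  obtain f where f: "bij_betw f (levels P r j (Suc j)) crown6_carrier"
     "\<forall>x\<in>levels P r j (Suc j). \<forall>y\<in>levels P r j (Suc j). (x,y) \<in> r \<longleftrightarrow> (f x, f y) \<in> crown6_rel"
    using crown_ex[OF st assms(4,8)] by blast
  show ?thesis using K1[OF stack_po[OF st] f assms(2-)] .
qed

lemma SK2: assumes st: "six_stack P r" and "x \<in> P" "z \<in> P" "z' \<in> P" "rank P r x = j" "rank P r z = Suc j" "z \<noteq> z'" "rank P r z' = Suc j"
  shows "(x,z) \<in> r \<or> (x,z') \<in> r"
proof -
  obtain f where f: "bij_betw f (levels P r j (Suc j)) crown6_carrier"
     "\<forall>x\<in>levels P r j (Suc j). \<forall>y\<in>levels P r j (Suc j). (x,y) \<in> r \<longleftrightarrow> (f x, f y) \<in> crown6_rel"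
    using crown_ex[OF st assms(3,6)] by blast
  show ?thesis using K2[OF stack_po[OF st] f assms(2-)] .
qed

lemma SK3: assumes st: "six_stack P r" and "z \<in> P" "rank P r z = Suc j" shows "\<exists>x\<in>P. rank P r x = j \<and> (x,z) \<notin> r"
proof -
  obtain f where f: "bij_betw f (levels P r j (Suc j)) crown6_carrier"
     "\<forall>x\<in>levels P r j (Suc j). \<forall>y\<in>levels P r j (Suc j). (x,y) \<in> r \<longleftrightarrow> (f x, f y) \<in> crown6_rel"
    using crown_ex[OF st assms(2,3)] by blast
  show ?thesis using K3[OF stack_po[OF st] f assms(2-)] .
qed

lemma SK4: assumes st: "six_stack P r" and "z1 \<in> P" "z2 \<in> P" "z3 \<in> P" "z \<in> P" "rank P r z1 = Suc j" "rank P r z2 = Suc j" "rank P r z3 = Suc j"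
   "rank P r z = Suc j" "z1 \<noteq> z2" "z1 \<noteq> z3" "z2 \<noteq> z3"
  shows "z = z1 \<or> z = z2 \<or> z = z3"
proof -
  obtain f where f: "bij_betw f (levels P r j (Suc j)) crown6_carrier"
     "\<forall>x\<in>levels P r j (Suc j). \<forall>y\<in>levels P r j (Suc j). (x,y) \<in> r \<longleftrightarrow> (f x, f y) \<in> crown6_rel"
    using crown_ex[OF st assms(2,6)] by blast
  show ?thesis using K4[OF stack_po[OF st] f assms(2-)] .
qed

lemma SK5: assumes st: "six_stack P r" and "q \<in> P" "rank P r q = Suc j"
  shows "\<exists>z1\<in>P. \<exists>z2\<in>P. \<exists>z3\<in>P. rank P r z1 = Suc j \<and> rank P r z2 = Suc j \<and> rank P r z3 = Suc j
   \<and> z1 \<noteq> z2 \<and> z1 \<noteq> z3 \<and> z2 \<noteq> z3"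
proof -
  obtain f where f: "bij_betw f (levels P r j (Suc j)) crown6_carrier"
     "\<forall>x\<in>levels P r j (Suc j). \<forall>y\<in>levels P r j (Suc j). (x,y) \<in> r \<longleftrightarrow> (f x, f y) \<in> crown6_rel"
    using crown_ex[OF st assms(2,3)] by blast
  show ?thesis using K5[OF stack_po[OF st] f] .
qed

lemma SK6: assumes st: "six_stack P r" and "q \<in> P" "rank P r q = Suc j"
  shows "\<exists>x1\<in>P. \<exists>x2\<in>P. rank P r x1 = j \<and> rank P r x2 = j \<and> x1 \<noteq> x2"
proof -
  obtain f where f: "bij_betw f (levels P r j (Suc j)) crown6_carrier"
     "\<forall>x\<in>levels P r j (Suc j). \<forall>y\<in>levels P r j (Suc j). (x,y) \<in> r \<longleftrightarrow> (f x, f y) \<in> crown6_rel"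
    using crown_ex[OF st assms(2,3)] by blast
  show ?thesis using K6[OF stack_po[OF st] f] .
qed

lemma gap_base: assumes st: "six_stack P r" and u: "u \<in> P" and y: "y \<in> P" and ry: "rank P r y = Suc (Suc (rank P r u))"
  shows "(u,y) \<in> r"
proof -
  have po: "poset P r" using stack_po[OF st] .
  obtain w where w: "w \<in> P" "rank P r w = Suc (rank P r u)" using R3[OF po y ry] by blast
  obtain z1 z2 z3 where z: "z1 \<in> P" "z2 \<in> P" "z3 \<in> P" "rank P r z1 = Suc (rank P r u)" "rank P r z2 = Suc (rank P r u)"
     "rank P r z3 = Suc (rank P r u)" "z1 \<noteq> z2" "z1 \<noteq> z3" "z2 \<noteq> z3"
    using SK5[OF st w] by blast
  have A: "(u,z1) \<in> r \<or> (u,z2) \<in> r" "(u,z1) \<in> r \<or> (u,z3) \<in> r" "(u,z2) \<in> r \<or> (u,z3) \<in> r"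
    using SK2[OF st u _ _ refl] z by metis+
  have B: "(z1,y) \<in> r \<or> (z2,y) \<in> r" "(z1,y) \<in> r \<or> (z3,y) \<in> r" "(z2,y) \<in> r \<or> (z3,y) \<in> r"
    using SK1[OF st _ _ y _ _ _ ry] z by metis+
  show ?thesis using A B rtrans[OF po] by blast
qed

lemma gap: assumes st: "six_stack P r" and u: "u \<in> P" and y: "y \<in> P" and ry: "rank P r u + 2 \<le> rank P r y"
  shows "(u,y) \<in> r"
proof -
  have po: "poset P r" using stack_po[OF st] .
  have "\<forall>y\<in>P. rank P r y = Suc (Suc (rank P r u)) + d \<longrightarrow> (u,y) \<in> r" for d
  proof (induction d)
    case 0 then show ?case using gap_base[OF st u] by simp
  next
    case (Suc d)
    show ?case
    proof (intro ballI impI)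
      fix y assume y: "y \<in> P" "rank P r y = Suc (Suc (rank P r u)) + Suc d"
      obtain w where w: "w \<in> P" "less_in r w y" "rank P r w = Suc (Suc (rank P r u)) + d" using R3[OF po y(1)] y(2) by auto
      then show "(u,y) \<in> r" using Suc.IH rtrans[OF po] unfolding less_in_def by blast
    qed
  qed
  moreover obtain d where "rank P r y = Suc (Suc (rank P r u)) + d" using ry by (metis add_2_eq_Suc' add.commute le_Suc_ex)
  ultimately show ?thesis using y by blast
qed

lemma antichain3: assumes st: "six_stack P r" and P: "y \<in> P" "a2 \<in> P" "a3 \<in> P" and ry: "rank P r y = Suc i"
  and i12: "(y,a2) \<notin> r" "(a2,y) \<notin> r" and i13: "(y,a3) \<notin> r" "(a3,y) \<notin> r" and i23: "(a2,a3) \<notin> r" "(a3,a2) \<notin> r"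
  and d: "a2 \<noteq> a3"
  shows "rank P r a2 = Suc i"
proof -
  have po: "poset P r" using stack_po[OF st] .
  have ny2: "y \<noteq> a2" using i12 rrefl[OF po P(1)] by auto
  have ny3: "y \<noteq> a3" using i13 rrefl[OF po P(1)] by auto
  have g: "\<not> rank P r a2 + 2 \<le> rank P r y" "\<not> rank P r y + 2 \<le> rank P r a2"
     "\<not> rank P r a3 + 2 \<le> rank P r y" "\<not> rank P r y + 2 \<le> rank P r a3"
     "\<not> rank P r a2 + 2 \<le> rank P r a3" "\<not> rank P r a3 + 2 \<le> rank P r a2"
    using gap[OF st] P i12 i13 i23 by blast+
  have r2: "rank P r a2 = i \<or> rank P r a2 = Suc i \<or> rank P r a2 = Suc (Suc i)" using g ry by linarith
  have r3: "rank P r a3 = i \<or> rank P r a3 = Suc i \<or> rank P r a3 = Suc (Suc i)" using g ry by linarith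
  show ?thesis
  proof (rule ccontr)
    assume ne: "rank P r a2 \<noteq> Suc i"
    show False
    proof (cases "rank P r a2 = i")
      case True
      then have "rank P r a3 \<noteq> Suc (Suc i)" using g by linarith
      then consider "rank P r a3 = i" | "rank P r a3 = Suc i" using r3 by blast
      then show False
      proof cases
        case 1 then show False using SK1[OF st P(2) P(3) P(1) True 1 d ry] i12 i13 by blast
      next
        case 2 then show False using SK2[OF st P(2) P(1) P(3) True ry ny3 2] i12 i23 by blast
      qed
    next
      case False
      then have a2: "rank P r a2 = Suc (Suc i)" using r2 ne by blast
      then have "rank P r a3 \<noteq> i" using g by linarith
      then consider "rank P r a3 = Suc (Suc i)" | "rank P r a3 = Suc i" using r3 by blast
      then show False
      proof cases
        case 1 then show False using SK2[OF st P(1) P(2) P(3) ry a2 d 1] i12 i13 by blast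
      next
        case 2 then show False using SK1[OF st P(1) P(3) P(2) ry 2 ny3 a2] i12 i23 by blast
      qed
    qed
  qed
qed


theorem lemma5p2:
  fixes P Q :: "'a set" and r :: "('a \<times> 'a) set" and i :: nat
  assumes "six_stack P r"
    and "Q \<subseteq> P"
    and "iso_tower_of_sections Q (induced r Q)"
    and "levels P r i i \<subseteq> Q"
    and "\<not> levels P r (i+1) (i+1) \<subseteq> Q"
  shows "levels P r (i+1) (i+1) \<inter> Q = {}"
proof (rule ccontr)
  note st = assms(1)
  have po: "poset P r" using stack_po[OF st] .
  assume "levels P r (i+1) (i+1) \<inter> Q \<noteq> {}"
  then obtain y where y0: "y \<in> levels P r (i+1) (i+1)" "y \<in> Q" by blast
  then have y: "y \<in> P" "rank P r y = Suc i" "y \<in> Q" unfolding levels_def by auto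
  obtain y0' where y0': "y0' \<in> levels P r (i+1) (i+1)" "y0' \<notin> Q" using assms(5) by blast
  then have y': "y0' \<in> P" "rank P r y0' = Suc i" "y0' \<notin> Q" unfolding levels_def by auto
  obtain x where x: "x \<in> P" "rank P r x = i" "(x,y) \<notin> r" using SK3[OF st y(1,2)] by blast
  have yx: "(y,x) \<notin> r"
  proof
    assume "(y,x) \<in> r"
    moreover have "y \<noteq> x" using x y by auto
    ultimately have "rank P r y < rank P r x" using R2[OF po y(1) x(1)] unfolding less_in_def by blast
    then show False using x y by simp
  qed
  obtain x1 x2 where "x1 \<in> P" "x2 \<in> P" "rank P r x1 = i" "rank P r x2 = i" "x1 \<noteq> x2" using SK6[OF st y(1,2)] by blast
  then obtain x' where x': "x' \<in> P" "rank P r x' = i" "x' \<noteq> x" by metis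
  have xx': "(x,x') \<notin> r" "(x',x) \<notin> r" using R2[OF po] x x' unfolding less_in_def by fastforce+
  have xQ: "x \<in> Q" "x' \<in> Q" using assms(4) x x' unfolding levels_def by auto
  obtain L g where L: "L \<noteq> []" "\<forall>S\<in>set L. is_section (fst S) (snd S)"
     and gb: "bij_betw g Q (osum_carrier L)"
     and gr: "\<forall>a\<in>Q. \<forall>b\<in>Q. (a,b) \<in> induced r Q \<longleftrightarrow> (g a, g b) \<in> osum_rel L"
    using assms(3) unfolding iso_tower_of_sections_def poset_iso_def by blast
  have gr': "(a,b) \<in> r \<longleftrightarrow> (g a, g b) \<in> osum_rel L" if "a \<in> Q" "b \<in> Q" for a b
    using gr that unfolding induced_def by blast
  have gc: "g a \<in> osum_carrier L" if "a \<in> Q" for a using gb that unfolding bij_betw_def by blast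
  have ginj: "a = b" if "a \<in> Q" "b \<in> Q" "g a = g b" for a b using gb that unfolding bij_betw_def inj_on_def by blast
  have same: "fst (g a) = fst (g b)" if ab: "a \<in> Q" "b \<in> Q" "(a,b) \<notin> r" "(b,a) \<notin> r" for a b
  proof (rule ccontr)
    assume ne: "fst (g a) \<noteq> fst (g b)"
    obtain ja u where a': "g a = (ja,u)" by (metis prod.collapse)
    obtain jb v where b': "g b = (jb,v)" by (metis prod.collapse)
    have "ja < jb \<or> jb < ja" using ne a' b' by auto
    then have "(g a, g b) \<in> osum_rel L \<or> (g b, g a) \<in> osum_rel L"
      using gc[OF ab(1)] gc[OF ab(2)] a' b' unfolding osum_rel_def by auto
    then show False using gr' ab by blast
  qed
  define m where "m = fst (g y)"
  have mx: "fst (g x) = m" "fst (g x') = m" using same[OF xQ(1) y(3)] same[OF xQ(2) xQ(1)] x yx xx' m_def by auto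
  have ym: "g y = (m, snd (g y))" using m_def by simp
  have xm: "g x = (m, snd (g x))" "g x' = (m, snd (g x'))" using mx by (metis prod.collapse)+
  have oc: "(jj,zz) \<in> osum_carrier L \<longleftrightarrow> jj < length L \<and> zz \<in> fst (L!jj)" for jj zz
    unfolding osum_carrier_def by simp
  have mL: "m < length L" and inA: "snd (g y) \<in> fst (L!m)" "snd (g x) \<in> fst (L!m)" "snd (g x') \<in> fst (L!m)"
    using gc[OF y(3)] gc[OF xQ(1)] gc[OF xQ(2)] oc ym xm by (metis, metis, metis, metis)
  have dxy: "y \<noteq> x" "y \<noteq> x'" using x x' y by auto
  have dist1: "snd (g y) \<noteq> snd (g x)"
  proof
    assume "snd (g y) = snd (g x)"
    then have "g y = g x" using ym xm by simp
    then show False using ginj[OF y(3) xQ(1)] dxy by blast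
  qed
  have dist2: "snd (g y) \<noteq> snd (g x')"
  proof
    assume "snd (g y) = snd (g x')"
    then have "g y = g x'" using ym xm by simp
    then show False using ginj[OF y(3) xQ(2)] dxy by blast
  qed
  have dist3: "snd (g x) \<noteq> snd (g x')"
  proof
    assume "snd (g x) = snd (g x')"
    then have "g x = g x'" using xm by simp
    then show False using ginj[OF xQ(1) xQ(2)] x'(3) by blast
  qed
  note dist = dist1 dist2 dist3
  have sec: "is_section (fst (L!m)) (snd (L!m))" using L(2) mL by simp
  have nc2: "card (fst (L!m)) \<noteq> 2"
  proof
    assume c2: "card (fst (L!m)) = 2"
    then have "finite (fst (L!m))" by (metis card.infinite zero_neq_numeral)
    moreover have "{snd (g y), snd (g x), snd (g x')} \<subseteq> fst (L!m)" using inA by auto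
    ultimately have "card {snd (g y), snd (g x), snd (g x')} \<le> 2" using c2 card_mono by metis
    then show False using dist by simp
  qed
  obtain N where N: "fst (L!m) = {0..2} \<times> {0..N}"
     and ac: "\<forall>k\<le>N. \<forall>i\<le>2. \<forall>j\<le>2. i \<noteq> j \<longrightarrow> ((i,k),(j,k)) \<notin> snd (L!m)"
  proof -
    have disj: "(card (fst (L!m)) = 2 \<and> (\<forall>x\<in>fst (L!m). \<forall>y\<in>fst (L!m). (x, y) \<in> snd (L!m) \<longrightarrow> x = y))
     \<or> (\<exists>n\<ge>1. fst (L!m) = {0..2} \<times> {0..n}
         \<and> (\<forall>i\<le>2. \<forall>k l. k < l \<and> l \<le> n \<longrightarrow> less_in (snd (L!m)) (i,k) (i,l))
         \<and> (\<forall>k\<le>n. \<forall>i\<le>2. \<forall>j\<le>2. i \<noteq> j \<longrightarrow> ((i,k),(j,k)) \<notin> snd (L!m))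
         \<and> (\<forall>i\<le>2. \<forall>j\<le>2. \<forall>k\<le>n. \<forall>l\<le>n. less_in (snd (L!m)) (i,k) (j,l)
               \<longrightarrow> less_in (snd (L!m)) ((i+1) mod 3, k) ((j+1) mod 3, l))
         \<and> (\<forall>k<n. \<exists>i\<le>2. \<exists>j\<le>2. \<not> less_in (snd (L!m)) (i,k) (j,k+1)))"
      using sec unfolding is_section_def by (rule conjunct2)
    then obtain n where "fst (L!m) = {0..2} \<times> {0..n}"
         "\<forall>k\<le>n. \<forall>i\<le>2. \<forall>j\<le>2. i \<noteq> j \<longrightarrow> ((i,k),(j,k)) \<notin> snd (L!m)"
      using nc2 by (elim disjE exE conjE) (simp, blast)
    then show ?thesis using that by blast
  qed
  obtain a k where ak: "snd (g y) = (a,k)" "a \<le> 2" "k \<le> N" using inA(1) N by auto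
  define e where "e t = inv_into Q g (m,(t,k))" for t
  have ec: "(m,(t,k)) \<in> osum_carrier L" if "t \<le> 2" for t
    using mL N ak that unfolding osum_carrier_def by auto
  have img: "g ` Q = osum_carrier L" using gb unfolding bij_betw_def by blast
  have eQ: "e t \<in> Q" "g (e t) = (m,(t,k))" if "t \<le> 2" for t
  proof -
    have "(m,(t,k)) \<in> g ` Q" using ec[OF that] img by simp
    then show "e t \<in> Q" "g (e t) = (m,(t,k))" unfolding e_def by (rule inv_into_into, rule f_inv_into_f)
  qed
  have ea: "e a = y" using ginj[OF eQ(1)[OF ak(2)] y(3)] eQ(2)[OF ak(2)] ym ak(1) by simp
  have einc: "(e t, e t') \<notin> r" if "t \<le> 2" "t' \<le> 2" "t \<noteq> t'" for t t'
  proof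
    assume "(e t, e t') \<in> r"
    then have "(g (e t), g (e t')) \<in> osum_rel L" using gr' eQ that by blast
    then have "((m,(t,k)),(m,(t',k))) \<in> osum_rel L" using eQ that by simp
    then have "((t,k),(t',k)) \<in> snd (L!m)" unfolding osum_rel_def by simp
    moreover have "((t,k),(t',k)) \<notin> snd (L!m)" using ac ak(3) that by simp
    ultimately show False by contradiction
  qed
  have eneq: "e t \<noteq> e t'" if "t \<le> 2" "t' \<le> 2" "t \<noteq> t'" for t t'
    using eQ(2)[OF that(1)] eQ(2)[OF that(2)] that(3) by auto
  have eP: "e t \<in> P" if "t \<le> 2" for t using eQ(1)[OF that] assms(2) by blast
  have erank: "rank P r (e t) = Suc i" if t: "t \<le> 2" for t
  proof (cases "t = a")
    case True then show ?thesis using ea y by simp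
  next
    case False
    define t'' where "t'' = 3 - t - a"
    have t1: "t'' \<le> 2" unfolding t''_def using t ak(2) False by presburger
    have t2: "t'' \<noteq> t" unfolding t''_def using t ak(2) False by presburger
    have t3: "t'' \<noteq> a" unfolding t''_def using t ak(2) False by presburger
    note t'' = t1 t2 t3
    have "(y, e t) \<notin> r" "(e t, y) \<notin> r" "(y, e t'') \<notin> r" "(e t'', y) \<notin> r" "(e t, e t'') \<notin> r" "(e t'', e t) \<notin> r"
      using einc[OF ak(2) t] einc[OF t ak(2)] einc[OF ak(2) t''(1)] einc[OF t''(1) ak(2)] einc[OF t t''(1)] einc[OF t''(1) t]
        False t'' ea by auto
    moreover have "e t \<noteq> e t''" using eneq[OF t t''(1)] t'' by auto
    ultimately show ?thesis
      using antichain3[OF st y(1) eP[OF t] eP[OF t''(1)] y(2)] by blast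
  qed
  have "y0' = e 0 \<or> y0' = e 1 \<or> y0' = e 2"
    using SK4[OF st eP[of 0] eP[of 1] eP[of 2] y'(1) erank[of 0] erank[of 1] erank[of 2] y'(2)] eneq by simp
  then show False using y'(3) eQ(1) by auto
qed

end
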